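(* Let $\psi\in\mathbb{R}[x]$ and suppose $\psi=\psi^{(1)}\psi^{(2)}$ with $\psi^{(1)},\psi^{(2)}\in\mathbb{R}[x]$ non-constant. If the Fischer operator $F_\psi$ is surjective, then $\psi^{(1)}$ and $\psi^{(2)}$ are harmonic divisors.
   Context: $\mathbb{R}[x]$ denotes the real polynomials in $d$ variables, $\Delta$ the Laplacian, and $F_\psi:\mathbb{R}[x]\to\mathbb{R}[x]$, $F_\psi(q)=\Delta(\psi q)$. A polynomial $f$ is a harmonic divisor if there exists a non-zero polynomial $q$ such that $fq$ is harmonic. *)

theory Defs
  imports Complex_Main "HOL-Library.Poly_Mapping"
begin

text \<open>Real polynomials in the variables indexed by the finite type 'v (so d = CARD('v)):
  a polynomial is a finitely supported map from monomials (finitely supported exponent vectors)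
  to real coefficients; multiplication is the convolution product of Poly_Mapping.\<close>

type_synonym 'v rpoly = "('v \<Rightarrow>\<^sub>0 nat) \<Rightarrow>\<^sub>0 real"

definition mpderiv :: "'v \<Rightarrow> 'v rpoly \<Rightarrow> 'v rpoly" where
  "mpderiv i p = (\<Sum>m\<in>Poly_Mapping.keys p.
     Poly_Mapping.single (m - Poly_Mapping.single i (1::nat))
       (real (Poly_Mapping.lookup m i) * Poly_Mapping.lookup p m))"

definition laplacian :: "'v::finite rpoly \<Rightarrow> 'v rpoly" where
  "laplacian p = (\<Sum>i\<in>UNIV. mpderiv i (mpderiv i p))"

definition harmonic :: "'v::finite rpoly \<Rightarrow> bool" where
  "harmonic p \<longleftrightarrow> laplacian p = 0"

definition fischer :: "'v::finite rpoly \<Rightarrow> 'v rpoly \<Rightarrow> 'v rpoly" where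
  "fischer psi q = laplacian (psi * q)"

definition harmonic_divisor :: "'v::finite rpoly \<Rightarrow> bool" where
  "harmonic_divisor f \<longleftrightarrow> (\<exists>q. q \<noteq> 0 \<and> harmonic (f * q))"

definition is_const_poly :: "'v rpoly \<Rightarrow> bool" where
  "is_const_poly p \<longleftrightarrow> Poly_Mapping.keys p \<subseteq> {0}"

end

theory Submission
  imports Defs
begin

lemma mult_key:
  fixes f g :: "('v \<Rightarrow>\<^sub>0 nat) \<Rightarrow>\<^sub>0 real"
  assumes H: "\<forall>l\<in>Poly_Mapping.keys f. \<forall>q\<in>Poly_Mapping.keys g. l + q = a + b \<longrightarrow> l = a \<and> q = b"
  shows "Poly_Mapping.lookup (f * g) (a + b) = Poly_Mapping.lookup f a * Poly_Mapping.lookup g b"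
proof -
  have inner: "Poly_Mapping.lookup f l * (\<Sum>q. Poly_Mapping.lookup g q when a + b = l + q)
      = (Poly_Mapping.lookup f a * Poly_Mapping.lookup g b when l = a)" for l
  proof (cases "l = a")
    case True
    have "(\<lambda>q. Poly_Mapping.lookup g q when a + b = l + q) = (\<lambda>q. Poly_Mapping.lookup g q when q = b)"
      using True by (auto simp: when_def)
    then show ?thesis using True by simp
  next
    case False
    show ?thesis
    proof (cases "Poly_Mapping.lookup f l = 0")
      case True then show ?thesis using False by simp
    next
      case fl: False
      have "(\<lambda>q. Poly_Mapping.lookup g q when a + b = l + q) = (\<lambda>q. 0)"
      proof
        fix q
        show "(Poly_Mapping.lookup g q when a + b = l + q) = 0"
        proof (cases "Poly_Mapping.lookup g q = 0")
          case True then show ?thesis by simp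
        next
          case gq: False
          have "l \<in> Poly_Mapping.keys f" "q \<in> Poly_Mapping.keys g"
            using fl gq by (simp_all add: in_keys_iff)
          then have "a + b \<noteq> l + q" using H False by metis
          then show ?thesis by simp
        qed
      qed
      then have "(\<Sum>q. Poly_Mapping.lookup g q when a + b = l + q) = 0"
        by (subst \<open>(\<lambda>q. _) = _\<close>) simp
      then show ?thesis using False by simp
    qed
  qed
  show ?thesis unfolding lookup_mult inner by simp
qed

lemma exists_r:
  "\<exists>r :: ('v::finite \<Rightarrow>\<^sub>0 nat) \<Rightarrow> (nat \<Rightarrow>\<^sub>0 nat). inj r \<and> (\<forall>a b. r (a + b) = r a + r b)"
proof -
  obtain e :: "'v \<Rightarrow> nat" and n where e: "inj e"
    using finite_imp_inj_to_nat_seg[OF finite_UNIV] by blast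
  define r where "r m = Abs_poly_mapping (\<lambda>k. if k \<in> range e then Poly_Mapping.lookup m (inv e k) else 0)"
    for m :: "'v \<Rightarrow>\<^sub>0 nat"
  have fin: "finite {k. (if k \<in> range e then Poly_Mapping.lookup m (inv e k) else 0) \<noteq> 0}" for m :: "'v \<Rightarrow>\<^sub>0 nat"
    by (rule finite_subset[of _ "range e"]) auto
  have lk: "Poly_Mapping.lookup (r m) k = (if k \<in> range e then Poly_Mapping.lookup m (inv e k) else 0)" for m k
    unfolding r_def using fin by simp
  have "inj r"
  proof (rule injI)
    fix x y assume "r x = r y"
    then have "Poly_Mapping.lookup (r x) (e v) = Poly_Mapping.lookup (r y) (e v)" for v by simp
    then have "Poly_Mapping.lookup x v = Poly_Mapping.lookup y v" for v
      using e by (simp add: lk)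
    then show "x = y" by (simp add: poly_mapping_eqI)
  qed
  moreover have "r (a + b) = r a + r b" for a b
    by (rule poly_mapping_eqI) (simp add: lk lookup_add)
  ultimately show ?thesis by blast
qed

lemma unit_const:
  fixes p q :: "'v::finite rpoly"
  assumes pq: "p * q = 1"
  shows "Poly_Mapping.keys p \<subseteq> {0}"
proof -
  obtain r :: "('v \<Rightarrow>\<^sub>0 nat) \<Rightarrow> (nat \<Rightarrow>\<^sub>0 nat)" where rinj: "inj r" and radd: "\<And>a b. r (a + b) = r a + r b"
    using exists_r by blast
  have r0: "r 0 = 0" using radd[of 0 0] by simp
  have "p \<noteq> 0" "q \<noteq> 0" using pq by auto
  define A where "A = Poly_Mapping.keys p"
  define B where "B = Poly_Mapping.keys q"
  have A: "finite A" "A \<noteq> {}" using \<open>p \<noteq> 0\<close> by (auto simp: A_def)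
  have B: "finite B" "B \<noteq> {}" using \<open>q \<noteq> 0\<close> by (auto simp: B_def)
  have sum0: "a + b = 0" if a: "a \<in> A" and b: "b \<in> B"
    and H: "\<forall>l\<in>A. \<forall>q\<in>B. l + q = a + b \<longrightarrow> l = a \<and> q = b" for a b
  proof -
    have "Poly_Mapping.lookup (p * q) (a + b) = Poly_Mapping.lookup p a * Poly_Mapping.lookup q b"
      using mult_key[of p q a b] H by (simp add: A_def B_def)
    also have "\<dots> \<noteq> 0" using a b by (simp add: A_def B_def in_keys_iff)
    finally show ?thesis using pq by (simp add: lookup_one when_def split: if_splits)
  qed
  have zero: "a = 0" if "a + b = 0" for a b :: "'v \<Rightarrow>\<^sub>0 nat"
  proof (rule poly_mapping_eqI)
    fix v
    have "Poly_Mapping.lookup (a + b) v = 0" using that by simp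
    then show "Poly_Mapping.lookup a v = Poly_Mapping.lookup 0 v" by (simp add: lookup_add)
  qed
  have "Max (r ` A) \<in> r ` A" using A by simp
  then obtain a0 where a0: "a0 \<in> A" "r a0 = Max (r ` A)" by force
  have "Max (r ` B) \<in> r ` B" using B by simp
  then obtain b0 where b0: "b0 \<in> B" "r b0 = Max (r ` B)" by force
  have "Min (r ` A) \<in> r ` A" using A by simp
  then obtain a1 where a1: "a1 \<in> A" "r a1 = Min (r ` A)" by force
  have "Min (r ` B) \<in> r ` B" using B by simp
  then obtain b1 where b1: "b1 \<in> B" "r b1 = Min (r ` B)" by force
  have a0le: "r a \<le> r a0" if "a \<in> A" for a using a0 A that by simp
  have b0le: "r b \<le> r b0" if "b \<in> B" for b using b0 B that by simp
  have a1le: "r a1 \<le> r a" if "a \<in> A" for a using a1 A that by simp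
  have b1le: "r b1 \<le> r b" if "b \<in> B" for b using b1 B that by simp
  have "a0 + b0 = 0"
  proof (rule sum0[OF a0(1) b0(1)], intro ballI impI)
    fix l q assume l: "l \<in> A" and q: "q \<in> B" and e: "l + q = a0 + b0"
    have e2: "r l + r q = r a0 + r b0" using e radd by metis
    have "r l = r a0"
    proof (rule ccontr)
      assume "r l \<noteq> r a0"
      then have "r l < r a0" using a0le[OF l] by simp
      then have "r l + r q < r a0 + r b0" using b0le[OF q] by (rule add_less_le_mono)
      then show False using e2 by simp
    qed
    then have "l = a0" using rinj by (simp add: inj_eq)
    then show "l = a0 \<and> q = b0" using e by simp
  qed
  then have "a0 = 0" by (rule zero)
  have "a1 + b1 = 0"
  proof (rule sum0[OF a1(1) b1(1)], intro ballI impI)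
    fix l q assume l: "l \<in> A" and q: "q \<in> B" and e: "l + q = a1 + b1"
    have e2: "r l + r q = r a1 + r b1" using e radd by metis
    have "r l = r a1"
    proof (rule ccontr)
      assume "r l \<noteq> r a1"
      then have "r a1 < r l" using a1le[OF l] by simp
      then have "r a1 + r b1 < r l + r q" using b1le[OF q] by (rule add_less_le_mono)
      then show False using e2 by simp
    qed
    then have "l = a1" using rinj by (simp add: inj_eq)
    then show "l = a1 \<and> q = b1" using e by simp
  qed
  then have "a1 = 0" by (rule zero)
  show ?thesis
  proof
    fix a assume "a \<in> Poly_Mapping.keys p"
    then have a: "a \<in> A" by (simp add: A_def)
    have "r a = r 0" using a0le[OF a] a1le[OF a] \<open>a0 = 0\<close> \<open>a1 = 0\<close> by (simp add: antisym)
    then show "a \<in> {0}" using rinj by (simp add: inj_eq)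
  qed
qed

lemma mpderiv_alt:
  assumes "finite S" "Poly_Mapping.keys p \<subseteq> S"
  shows "mpderiv i p = (\<Sum>m\<in>S. Poly_Mapping.single (m - Poly_Mapping.single i (1::nat))
       (real (Poly_Mapping.lookup m i) * Poly_Mapping.lookup p m))"
  unfolding mpderiv_def
  by (rule sum.mono_neutral_left) (use assms in \<open>auto simp: in_keys_iff\<close>)

lemma mpderiv_add: "mpderiv i (p + q) = mpderiv i p + mpderiv i q"
proof -
  define S where "S = Poly_Mapping.keys p \<union> Poly_Mapping.keys q"
  have f: "finite S" by (simp add: S_def)
  have "Poly_Mapping.keys (p + q) \<subseteq> S" using keys_add[of p q] by (auto simp: S_def)
  then show ?thesis
    using mpderiv_alt[OF f, of "p+q" i] mpderiv_alt[OF f, of p i] mpderiv_alt[OF f, of q i]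
    by (simp add: S_def lookup_add distrib_left single_add sum.distrib)
qed

lemma laplacian_add: "laplacian (p + q) = laplacian p + laplacian q"
  unfolding laplacian_def by (simp add: mpderiv_add sum.distrib)

lemma laplacian_diff: "laplacian (p - q) = laplacian p - laplacian q"
  using laplacian_add[of "p - q" q] by (simp add: eq_diff_eq)

lemma half:
  fixes psi1 psi2 :: "'v::finite rpoly"
  assumes "\<not> is_const_poly psi2" and "surj (fischer (psi1 * psi2))"
  shows "harmonic_divisor psi1"
proof (rule ccontr)
  assume nh: "\<not> harmonic_divisor psi1"
  obtain q where q: "fischer (psi1 * psi2) q = laplacian (psi1 * 1)"
    using assms(2) by (metis surjD)
  have "laplacian (psi1 * (1 - psi2 * q)) = 0"
    using q by (simp add: fischer_def right_diff_distrib laplacian_diff mult.assoc)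
  moreover have "\<forall>x. x \<noteq> 0 \<longrightarrow> laplacian (psi1 * x) \<noteq> 0"
    using nh by (auto simp: harmonic_divisor_def harmonic_def)
  ultimately have "1 - psi2 * q = 0" by blast
  then have "psi2 * q = 1" by simp
  then have "Poly_Mapping.keys psi2 \<subseteq> {0}" by (rule unit_const)
  then show False using assms(1) by (simp add: is_const_poly_def)
qed

theorem mainTheorem4:
  fixes psi1 psi2 :: "'v::finite rpoly"
  assumes "\<not> is_const_poly psi1" and "\<not> is_const_poly psi2"
    and "surj (fischer (psi1 * psi2))"
  shows "harmonic_divisor psi1 \<and> harmonic_divisor psi2"
proof
  show "harmonic_divisor psi1" using half assms(2,3) by blast
  show "harmonic_divisor psi2" using half[of psi1 psi2] assms(1,3) by (simp add: mult.commute)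
qed

end
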